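(* Let $N\ge 2$ and let $A\in \mathrm{Mat}_N^+(\mathbb{Z})$. Suppose the characteristic polynomial of $A$ is irreducible in $\mathbb{Q}[x]$ and that the eigenvalues of $A$ are pairwise distinct positive real numbers. Then for every $\varepsilon>0$ there are infinitely many points $P\in \mathbb{G}_m^N(\mathbb{Q})$ with \[ 0<\hat h_A^+(P)<\varepsilon . \]
   Context: $\mathrm{Mat}_N^+(\mathbb{Z})$ denotes the set of $N\times N$ integer matrices with nonzero determinant. For $A=(a_{ij})\in \mathrm{Mat}_N^+(\mathbb{Z})$, the monomial map $\varphi_A:\mathbb{G}_m^N(\overline{\mathbb{Q}})\to\mathbb{G}_m^N(\overline{\mathbb{Q}})$ is $\varphi_A(x_1,\dots,x_N)=\bigl(\prod_{j} x_j^{a_{1j}},\dots,\prod_j x_j^{a_{Nj}}\bigr)$; note $\varphi_A^n=\varphi_{A^n}$. For $P=(x_1,\dots,x_N)\in\mathbb{G}_m^N(\overline{\mathbb{Q}})$ with coordinates in a number field $K$, $h(P)=\sum_{v\in M_K}\max\{0,\log\|x_1\|_v,\dots,\log\|x_N\|_v\}$ is the absolute logarithmic Weil height (i.e. the height of $(1:x_1:\dots:x_N)\in\mathbb{P}^N$, with normalized absolute values so it is independent of $K$). Let $\delta_A$ be the spectral radius of $A$ and let $\ell_A+1$ be the largest size of a Jordan block of $A$ belonging to an eigenvalue of modulus $\delta_A$. The canonical height is \[ \hat h_A^+(P)=\limsup_{n\to\infty}\frac{h(\varphi_A^n(P))}{n^{\ell_A}\delta_A^n}. \] *)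

theory Defs
  imports "Jordan_Normal_Form.Spectral_Radius" "HOL-Library.Liminf_Limsup" "HOL-Library.Extended_Real"
begin

definition cmat :: "int mat \<Rightarrow> complex mat" where
  "cmat A = map_mat of_int A"

definition delta_A :: "int mat \<Rightarrow> real" where
  "delta_A A = spectral_radius (cmat A)"

definition ell_A :: "int mat \<Rightarrow> nat" where
  "ell_A A = Max {k - 1 | k a n_as. jordan_nf (cmat A) n_as \<and> (k, a) \<in> set n_as
                                     \<and> cmod a = delta_A A}"

text \<open>Monomial map phi_A on points of G_m^N(Q), represented as rational vectors of length N.\<close>
definition mono_map :: "int mat \<Rightarrow> rat vec \<Rightarrow> rat vec" where
  "mono_map A P = vec (dim_row A) (\<lambda>i. \<Prod>j<dim_col A. (P $ j) powi (A $$ (i, j)))"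

text \<open>Absolute logarithmic Weil height of (1 : x_1 : ... : x_N) for rational x_i:
  log of the max of the absolute values of a primitive integer representative
  (d, d x_1, ..., d x_N), d = lcm of denominators.\<close>
definition weil_height :: "rat vec \<Rightarrow> real" where
  "weil_height P =
     (let d = Lcm ((\<lambda>i. snd (quotient_of (P $ i))) ` {..<dim_vec P})
      in ln (Max (insert (real_of_int d)
                   ((\<lambda>i. real_of_rat \<bar>rat_of_int d * P $ i\<bar>) ` {..<dim_vec P}))))"

definition canon_height :: "int mat \<Rightarrow> rat vec \<Rightarrow> ereal" where
  "canon_height A P = limsup (\<lambda>n. ereal (weil_height ((mono_map A ^^ n) P)
                                       / (real n ^ ell_A A * delta_A A ^ n)))"

end

theory Submission
  imports Defs "HOL-Computational_Algebra.Field_as_Ring"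
begin


definition diagm :: "'a::zero list \<Rightarrow> 'a mat" where
  "diagm lam = mat (length lam) (length lam) (\<lambda>(i,j). if i = j then lam ! i else 0)"

lemma jm_diag: "(\<forall>(k,a)\<in>set n_as. k = 1) \<Longrightarrow> jordan_matrix n_as = diagm (map snd n_as)"
proof (induct n_as)
  case Nil
  then show ?case by (auto simp: jordan_matrix_def diagm_def)
next
  case (Cons na n_as)
  obtain k a where na: "na = (k,a)" by force
  with Cons have k: "k = 1" by auto
  from Cons have IH: "jordan_matrix n_as = diagm (map snd n_as)" by auto
  have "jordan_matrix (na # n_as) = four_block_mat (jordan_block 1 a)
     (0\<^sub>m 1 (length n_as)) (0\<^sub>m (length n_as) 1) (diagm (map snd n_as))"
    using IH unfolding jordan_matrix_def na k by (simp add: Let_def diagm_def)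
  also have "\<dots> = diagm (map snd (na # n_as))"
    by (rule eq_matI, auto simp: diagm_def na nth_Cons')
  finally show ?case .
qed

lemma sum_if_mult: assumes "i \<in> S" "finite S"
  shows "(\<Sum>j\<in>S. (if i = j then c else 0) * f j) = (c * f i :: 'a :: comm_ring_1)"
proof -
  have "(\<Sum>j\<in>S. (if i = j then c else 0) * f j) = (\<Sum>j\<in>S. if i = j then c * f i else 0)"
    by (rule sum.cong, auto)
  also have "\<dots> = c * f i" using assms by simp
  finally show ?thesis .
qed

lemma diagm_mult_vec: fixes lam :: "'a :: comm_ring_1 list" assumes "i < length lam" "v \<in> carrier_vec (length lam)"
  shows "(diagm lam *\<^sub>v v) $ i = lam ! i * v $ i"
  using assms unfolding diagm_def mult_mat_vec_def scalar_prod_def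
  by (auto simp: row_def sum_if_mult)



definition pt :: "int vec \<Rightarrow> rat vec" where
  "pt b = vec (dim_vec b) (\<lambda>i. 2 powi (b $ i))"

definition Hr :: "nat \<Rightarrow> (nat \<Rightarrow> real) \<Rightarrow> real" where
  "Hr N f = max 0 (Max (f ` {..<N})) + max 0 (Max ((\<lambda>i. - f i) ` {..<N}))"

lemma quot_pow2: "snd (quotient_of ((2::rat) powi e)) = 2 ^ nat (-e)"
proof (cases "e \<ge> 0")
  case True
  have "(2::rat) powi e = rat_of_int (2 ^ nat e)"
    using True by (simp add: power_int_def)
  then show ?thesis using True by (subst \<open>_ = _\<close>, subst quotient_of_rat_of_int) simp
next
  case False
  have q: "(0::int) < 2 ^ nat (-e)" by simp
  have "(2::rat) powi e = Rat.Fract 1 (2 ^ nat (-e))"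
    using False by (simp add: power_int_def Fract_of_int_quotient inverse_eq_divide power_one_over)
  then show ?thesis using q by (simp add: quotient_of_Fract normalize_def)
qed

lemma lcm_pow2: assumes "finite I" "I \<noteq> {}"
  shows "Lcm ((\<lambda>i. (2::int) ^ f i) ` I) = 2 ^ Max (f ` I)"
proof (rule Lcm_eqI)
  show "normalize ((2::int) ^ Max (f ` I)) = 2 ^ Max (f ` I)" by simp
  show "b dvd 2 ^ Max (f ` I)" if "b \<in> (\<lambda>i. (2::int) ^ f i) ` I" for b
    using that assms by (auto intro!: le_imp_power_dvd)
  show "2 ^ Max (f ` I) dvd c" if "\<And>b. b \<in> (\<lambda>i. (2::int) ^ f i) ` I \<Longrightarrow> b dvd c" for c
  proof -
    have "Max (f ` I) \<in> f ` I" using assms by auto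
    then obtain i where "i \<in> I" "Max (f ` I) = f i" by auto
    then show ?thesis using that by auto
  qed
qed

lemma ln_powi2: "ln ((2::real) powi k) = real_of_int k * ln 2"
proof (cases "k \<ge> 0")
  case True
  then show ?thesis by (simp add: power_int_def ln_realpow)
next
  case False
  then show ?thesis by (simp add: power_int_def ln_inverse ln_realpow ln_div)
qed

lemma of_rat_powi: "(of_rat (x powi k) :: real) = of_rat x powi k"
  by (simp add: power_int_def of_rat_power of_rat_inverse)

lemma Max_plus_const: assumes "finite S" "S \<noteq> {}"
  shows "Max ((\<lambda>x. (c::int) + x) ` S) = c + Max S"
  using assms by (intro mono_Max_commute[symmetric]) (auto intro: monoI)

lemma weil_pt: assumes "dim_vec b = N" "N > 0"
  shows "weil_height (pt b) = ln 2 * Hr N (\<lambda>i. real_of_int (b $ i))"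
proof -
  let ?I = "{..<N}"
  have fin: "finite ?I" and ne: "?I \<noteq> {}" using assms by auto
  define D where "D = Max ((\<lambda>i. nat (- b $ i)) ` ?I)"
  have dim: "dim_vec (pt b) = N" using assms by (simp add: pt_def)
  have pti: "i < N \<Longrightarrow> pt b $ i = 2 powi (b $ i)" for i using assms by (simp add: pt_def)
  have d: "Lcm ((\<lambda>i. snd (quotient_of (pt b $ i))) ` ?I) = 2 ^ D"
    unfolding D_def
    by (subst lcm_pow2[OF fin ne, symmetric], rule arg_cong[of _ _ Lcm],
        auto simp: pti quot_pow2)
  have el: "real_of_rat \<bar>rat_of_int (2 ^ D) * pt b $ i\<bar> = 2 powi (int D + b $ i)" if "i < N" for i
  proof -
    have "real_of_rat \<bar>rat_of_int (2 ^ D) * pt b $ i\<bar> = \<bar>2 ^ D * (2::real) powi (b $ i)\<bar>"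
      using that by (simp add: pti of_rat_mult of_rat_powi of_rat_power flip: abs_of_rat)
    also have "\<dots> = 2 powi (int D) * 2 powi (b $ i)" by (simp add: power_int_def)
    also have "\<dots> = 2 powi (int D + b $ i)" by (simp add: power_int_add)
    finally show ?thesis .
  qed
  have "insert (real_of_int (2 ^ D)) ((\<lambda>i. real_of_rat \<bar>rat_of_int (2 ^ D) * pt b $ i\<bar>) ` ?I)
     = (\<lambda>k. (2::real) powi k) ` insert (int D) ((\<lambda>i. int D + b $ i) ` ?I)"
  proof -
    have "(\<lambda>i. real_of_rat \<bar>rat_of_int (2 ^ D) * pt b $ i\<bar>) ` ?I = (\<lambda>i. 2 powi (int D + b $ i)) ` ?I"
      by (rule image_cong[OF refl el], auto)
    moreover have "real_of_int (2 ^ D) = (2::real) powi (int D)" by simp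
    ultimately show ?thesis by (simp only: image_insert image_image)
  qed
  moreover have "mono (\<lambda>k::int. (2::real) powi k)"
    by (rule monoI, rule power_int_increasing, auto)
  ultimately have "Max (insert (real_of_int (2 ^ D)) ((\<lambda>i. real_of_rat \<bar>rat_of_int (2 ^ D) * pt b $ i\<bar>) ` ?I))
     = 2 powi (Max (insert (int D) ((\<lambda>i. int D + b $ i) ` ?I)))"
    using fin by (simp add: mono_Max_commute)
  also have "Max (insert (int D) ((\<lambda>i. int D + b $ i) ` ?I)) = int D + max 0 (Max ((\<lambda>i. b $ i) ` ?I))"
  proof -
    have "Max (insert (int D) ((\<lambda>i. int D + b $ i) ` ?I)) = max (int D) (Max ((\<lambda>x. int D + x) ` ((\<lambda>i. b $ i) ` ?I)))"
      using fin ne by (simp add: Max_insert image_image)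
    also have "\<dots> = int D + max 0 (Max ((\<lambda>i. b $ i) ` ?I))"
      using fin ne by (simp add: Max_plus_const)
    finally show ?thesis .
  qed
  finally have wh: "weil_height (pt b) = real_of_int (int D + max 0 (Max ((\<lambda>i. b $ i) ` ?I))) * ln 2"
    unfolding weil_height_def Let_def dim d by (simp add: ln_powi2)
  have D: "int D = max 0 (Max ((\<lambda>i. - b $ i) ` ?I))"
  proof -
    have "int D = int (nat (Max ((\<lambda>i. - b $ i) ` ?I)))"
      unfolding D_def using fin ne
      by (subst mono_Max_commute[of nat], auto intro: monoI simp: image_image)
    then show ?thesis by simp
  qed
  have r1: "real_of_int (Max ((\<lambda>i. b $ i) ` ?I)) = Max ((\<lambda>i. real_of_int (b $ i)) ` ?I)"
    using fin ne by (subst mono_Max_commute[of real_of_int], auto intro: monoI simp: image_image)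
  have r2: "real_of_int (Max ((\<lambda>i. - b $ i) ` ?I)) = Max ((\<lambda>i. - real_of_int (b $ i)) ` ?I)"
    using fin ne by (subst mono_Max_commute[of real_of_int], auto intro: monoI simp: image_image)
  show ?thesis unfolding wh D Hr_def using r1 r2
    by (simp add: algebra_simps of_int_max)
qed


lemma prod_powi: assumes "(x::'a::field) \<noteq> 0" "finite S"
  shows "(\<Prod>j\<in>S. x powi f j) = x powi (\<Sum>j\<in>S. f j)"
  using assms(2) by (induct S rule: finite_induct) (auto simp: power_int_add assms(1))

lemma mono_pt: assumes A: "A \<in> carrier_mat N N" and b: "b \<in> carrier_vec N"
  shows "mono_map A (pt b) = pt (A *\<^sub>v b)"
proof (rule eq_vecI)
  show "dim_vec (mono_map A (pt b)) = dim_vec (pt (A *\<^sub>v b))"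
    using A b by (simp add: mono_map_def pt_def)
  fix i assume "i < dim_vec (pt (A *\<^sub>v b))"
  then have i: "i < N" using A by (simp add: pt_def)
  have "mono_map A (pt b) $ i = (\<Prod>j<N. (2 powi (b $ j)) powi (A $$ (i,j)))"
    using A b i by (simp add: mono_map_def pt_def)
  also have "\<dots> = (\<Prod>j<N. (2::rat) powi (A $$ (i,j) * b $ j))"
    by (rule prod.cong, auto simp: mult.commute power_int_mult)
  also have "\<dots> = 2 powi (\<Sum>j<N. A $$ (i,j) * b $ j)" by (rule prod_powi, auto)
  also have "(\<Sum>j<N. A $$ (i,j) * b $ j) = (A *\<^sub>v b) $ i"
    using A b i by (simp add: mult_mat_vec_def scalar_prod_def row_def atLeast0LessThan)
  finally show "mono_map A (pt b) $ i = pt (A *\<^sub>v b) $ i"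
    using A i by (simp add: pt_def)
qed

lemma Max_tendsto: assumes "finite I" "I \<noteq> {}" "\<And>i. i \<in> I \<Longrightarrow> ((\<lambda>n. g n i) \<longlongrightarrow> (L i :: real)) F"
  shows "((\<lambda>n. Max ((g n) ` I)) \<longlongrightarrow> Max (L ` I)) F"
  using assms
proof (induct I rule: finite_ne_induct)
  case (singleton x)
  then show ?case by simp
next
  case (insert x I)
  then show ?case by (simp add: Max_insert, intro tendsto_max, auto)
qed

lemma Hr_tendsto: assumes "N > 0" "\<And>i. i < N \<Longrightarrow> ((\<lambda>n. g n i) \<longlongrightarrow> L i) F"
  shows "((\<lambda>n. Hr N (g n)) \<longlongrightarrow> Hr N L) F"
proof -
  have ne: "{..<N} \<noteq> {}" using assms(1) by auto
  have 1: "((\<lambda>n. Max ((g n) ` {..<N})) \<longlongrightarrow> Max (L ` {..<N})) F"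
    by (rule Max_tendsto[OF _ ne], auto intro: assms(2))
  have 2: "((\<lambda>n. Max ((\<lambda>i. - g n i) ` {..<N})) \<longlongrightarrow> Max ((\<lambda>i. - L i) ` {..<N})) F"
    by (rule Max_tendsto[OF _ ne, where g = "\<lambda>n i. - g n i"], auto intro: assms(2) tendsto_minus)
  show ?thesis unfolding Hr_def by (intro tendsto_add tendsto_max tendsto_const 1 2)
qed

lemma Hr_div: assumes "N > 0" "(c::real) > 0"
  shows "Hr N (\<lambda>i. f i / c) = Hr N f / c"
proof -
  have m: "mono (\<lambda>x::real. x / c)" using assms by (intro monoI divide_right_mono) auto
  have ne: "{..<N} \<noteq> {}" using assms by auto
  have 1: "Max ((\<lambda>i. f i / c) ` {..<N}) = Max (f ` {..<N}) / c"
    using mono_Max_commute[OF m, of "f ` {..<N}"] ne by (simp add: image_image)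
  have 2: "Max ((\<lambda>i. - (f i / c)) ` {..<N}) = Max ((\<lambda>i. - f i) ` {..<N}) / c"
    using mono_Max_commute[OF m, of "(\<lambda>i. - f i) ` {..<N}"] ne by (simp add: image_image)
  have 3: "max 0 (x / c) = max 0 x / c" for x using assms by (auto simp: max_def zero_le_divide_iff)
  show ?thesis unfolding Hr_def 1 2 3 by (simp add: add_divide_distrib)
qed

lemma Hr_pos: assumes "i < N" "f i \<noteq> 0" shows "Hr N f > 0"
proof -
  have fin: "finite {..<N}" by simp
  have a: "f i \<le> Max (f ` {..<N})" using assms by (intro Max_ge) auto
  have b: "- f i \<le> Max ((\<lambda>i. - f i) ` {..<N})" using assms by (intro Max_ge) auto
  show ?thesis unfolding Hr_def using a b assms(2) by (cases "f i > 0") auto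
qed

lemma Hr_le: assumes "N > 0" "\<And>i. i < N \<Longrightarrow> \<bar>f i\<bar> \<le> B" shows "Hr N f \<le> 2 * B"
proof -
  have ne: "{..<N} \<noteq> {}" using assms by auto
  have B: "B \<ge> 0" using assms(2)[of 0] assms(1) by auto
  have a: "Max (f ` {..<N}) \<le> B" using ne assms(2) by (subst Max_le_iff) (auto simp: abs_le_iff)
  have b: "Max ((\<lambda>i. - f i) ` {..<N}) \<le> B" using ne assms(2) by (subst Max_le_iff) (auto simp: abs_le_iff)
  show ?thesis unfolding Hr_def using a b B by auto
qed


lemma small_comb: fixes t0 t1 :: real
  assumes nz: "\<And>m n::int. m \<noteq> 0 \<or> n \<noteq> 0 \<Longrightarrow> of_int m * t0 + of_int n * t1 \<noteq> 0"
    and eta: "\<eta> > 0"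
  shows "\<exists>m n::int. 0 < \<bar>of_int m * t0 + of_int n * t1\<bar> \<and> \<bar>of_int m * t0 + of_int n * t1\<bar> < \<eta>"
proof -
  have t1: "t1 \<noteq> 0" using nz[of 0 1] by auto
  define \<theta> where "\<theta> = t0 / t1"
  define M where "M = nat (ceiling (\<bar>t1\<bar> / \<eta>)) + 1"
  have M0: "M > 0" unfolding M_def by auto
  have "\<bar>t1\<bar> / \<eta> < real M" unfolding M_def by linarith
  then have M1: "\<bar>t1\<bar> / real M < \<eta>" using eta M0 by (simp add: field_simps)
  define f where "f k = floor (real M * frac (real k * \<theta>))" for k :: nat
  have sub: "f ` {0..M} \<subseteq> {0..<int M}"
  proof
    fix y assume "y \<in> f ` {0..M}"
    then obtain k where y: "y = f k" by auto
    have "0 \<le> frac (real k * \<theta>)" "frac (real k * \<theta>) < 1" by (auto simp: frac_lt_1)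
    then have "0 \<le> real M * frac (real k * \<theta>)" "real M * frac (real k * \<theta>) < real M"
      using M0 by auto
    then show "y \<in> {0..<int M}" unfolding y f_def by (auto simp: floor_less_iff)
  qed
  have "card (f ` {0..M}) \<le> card {0..<int M}" by (rule card_mono[OF _ sub], simp)
  also have "\<dots> = M" by simp
  also have "\<dots> < card {0..M}" by simp
  finally have "\<not> inj_on f {0..M}" using pigeonhole by blast
  then obtain k k' where kk: "k \<in> {0..M}" "k' \<in> {0..M}" "k \<noteq> k'" "f k = f k'"
    unfolding inj_on_def by blast
  define x where "x = real M * frac (real k * \<theta>)"
  define x' where "x' = real M * frac (real k' * \<theta>)"
  have "floor x = floor x'" using kk unfolding x_def x'_def f_def by auto
  then have "\<bar>x - x'\<bar> < 1" by linarith
  moreover have "x - x' = real M * (frac (real k * \<theta>) - frac (real k' * \<theta>))"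
    unfolding x_def x'_def by (simp add: right_diff_distrib)
  ultimately have "real M * \<bar>frac (real k * \<theta>) - frac (real k' * \<theta>)\<bar> < 1"
    by (simp add: abs_mult)
  then have "\<bar>frac (real k * \<theta>) - frac (real k' * \<theta>)\<bar> < 1 / real M"
    using M0 by (simp add: pos_less_divide_eq mult.commute)
  then have lt: "\<bar>(real k - real k') * \<theta> - (of_int (floor (real k * \<theta>)) - of_int (floor (real k' * \<theta>)))\<bar> < 1 / real M"
    by (simp add: frac_def algebra_simps)
  define m where "m = int k - int k'"
  define n where "n = - (floor (real k * \<theta>) - floor (real k' * \<theta>))"
  have m0: "m \<noteq> 0" using kk unfolding m_def by auto
  have eq: "of_int m * t0 + of_int n * t1 = t1 * ((real k - real k') * \<theta> - (of_int (floor (real k * \<theta>)) - of_int (floor (real k' * \<theta>))))"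
    unfolding m_def n_def \<theta>_def using t1 by (simp add: field_simps)
  have "\<bar>of_int m * t0 + of_int n * t1\<bar> < \<bar>t1\<bar> * (1 / real M)"
    unfolding eq abs_mult using lt t1 by (intro mult_strict_left_mono) auto
  also have "\<dots> < \<eta>" using M1 by simp
  finally have "\<bar>of_int m * t0 + of_int n * t1\<bar> < \<eta>" .
  moreover have "0 < \<bar>of_int m * t0 + of_int n * t1\<bar>" using nz[of m n] m0 by auto
  ultimately show ?thesis by blast
qed


lemma map_poly_of_rat_mult: "map_poly (of_rat :: rat \<Rightarrow> complex) (p * q) = map_poly of_rat p * map_poly of_rat q"
proof -
  interpret m: map_poly_comm_ring_hom "of_rat :: rat \<Rightarrow> complex" by unfold_locales
  show ?thesis by (rule m.hom_mult)
qed

lemma map_poly_of_rat_add: "map_poly (of_rat :: rat \<Rightarrow> complex) (p + q) = map_poly of_rat p + map_poly of_rat q"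
  by (simp add: hom_distribs)

lemma no_root_small: fixes chi p :: "rat poly"
  assumes irr: "irreducible chi" and p: "p \<noteq> 0" and deg: "degree p < degree chi"
    and root: "poly (map_poly of_rat chi) (x::complex) = 0"
  shows "poly (map_poly of_rat p) x \<noteq> 0"
proof
  assume px: "poly (map_poly of_rat p) x = 0"
  have nd: "\<not> chi dvd p"
  proof
    assume "chi dvd p"
    from dvd_imp_degree_le[OF this p] deg show False by simp
  qed
  have pe: "prime_elem chi" using irr by (rule field_poly_irreducible_imp_prime)
  have cop: "coprime chi p" by (rule prime_elem_imp_coprime[OF pe nd])
  have g: "gcd chi p = 1" using cop coprime_iff_gcd_eq_1 by blast
  define u where "u = fst (bezout_coefficients chi p)"
  define v where "v = snd (bezout_coefficients chi p)"
  have e: "u * chi + v * p = 1" unfolding u_def v_def using bezout_coefficients_fst_snd[of chi p] g by simp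
  have "poly (map_poly (of_rat :: rat \<Rightarrow> complex) (u * chi + v * p)) x =
     poly (map_poly of_rat u) x * poly (map_poly of_rat chi) x + poly (map_poly of_rat v) x * poly (map_poly of_rat p) x"
    by (simp only: map_poly_of_rat_add map_poly_of_rat_mult poly_add poly_mult)
  also have "\<dots> = 0" by (simp only: root px mult_zero_right add_0)
  finally have "poly (map_poly (of_rat :: rat \<Rightarrow> complex) (u * chi + v * p)) x = 0" .
  moreover have "poly (map_poly (of_rat :: rat \<Rightarrow> complex) (u * chi + v * p)) x = 1" unfolding e by simp
  ultimately show False by simp
qed

lemma blocks_one: assumes "\<forall>(k,a)\<in>set xs. k \<ge> (1::nat)"
  shows "card (set (map snd xs)) \<le> sum_list (map fst xs) \<and>
    (card (set (map snd xs)) = sum_list (map fst xs) \<longrightarrow> (\<forall>(k,a)\<in>set xs. k = 1) \<and> distinct (map snd xs))"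
  using assms
proof (induct xs)
  case Nil
  then show ?case by simp
next
  case (Cons ka xs)
  obtain k a where ka: "ka = (k,a)" by force
  from Cons ka have k1: "k \<ge> 1" and IH: "card (set (map snd xs)) \<le> sum_list (map fst xs) \<and>
    (card (set (map snd xs)) = sum_list (map fst xs) \<longrightarrow> (\<forall>(k,a)\<in>set xs. k = 1) \<and> distinct (map snd xs))"
    by auto
  have ci: "card (insert a (set (map snd xs))) \<le> card (set (map snd xs)) + 1"
    by (simp add: card_insert_if)
  show ?case
  proof (rule conjI)
    show "card (set (map snd (ka # xs))) \<le> sum_list (map fst (ka # xs))"
      using ci IH k1 by (simp add: ka)
  next
    show "card (set (map snd (ka # xs))) = sum_list (map fst (ka # xs)) \<longrightarrow>
      (\<forall>(k,a)\<in>set (ka # xs). k = 1) \<and> distinct (map snd (ka # xs))"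
    proof
    assume eq: "card (set (map snd (ka # xs))) = sum_list (map fst (ka # xs))"
    then have e: "card (insert a (set (map snd xs))) = k + sum_list (map fst xs)" by (simp add: ka)
    have "k = 1" using e ci IH k1 by linarith
    moreover have "card (set (map snd xs)) = sum_list (map fst xs)" using e ci IH k1 by linarith
    moreover have "a \<notin> set (map snd xs)"
    proof
      assume "a \<in> set (map snd xs)"
      then have "card (insert a (set (map snd xs))) = card (set (map snd xs))" by (simp add: insert_absorb)
      then show False using e IH k1 by linarith
    qed
    ultimately show "(\<forall>(k,a)\<in>set (ka # xs). k = 1) \<and> distinct (map snd (ka # xs))"
      using IH by (auto simp: ka)
  qed
  qed
qed

lemma poly_prod_blocks: "poly (\<Prod>(n,a)\<leftarrow>xs. [:- a, 1:] ^ n) (k::complex) = 0 \<longleftrightarrow> (\<exists>(n,a)\<in>set xs. n \<noteq> 0 \<and> a = k)"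
proof (induct xs)
  case Nil
  then show ?case by simp
next
  case (Cons na xs)
  obtain n a where na: "na = (n,a)" by force
  have "poly (\<Prod>(n,a)\<leftarrow>na # xs. [:- a, 1:] ^ n) k = (k - a) ^ n * poly (\<Prod>(n,a)\<leftarrow>xs. [:- a, 1:] ^ n) k"
    by (simp add: na)
  then show ?case using Cons by (auto simp: na)
qed

lemma jnf_facts: fixes B :: "complex mat"
  assumes B: "B \<in> carrier_mat N N" and card: "card (spectrum B) = N" and jnf: "jordan_nf B n_as"
  shows "(\<forall>(k,a)\<in>set n_as. k = 1) \<and> distinct (map snd n_as) \<and> set (map snd n_as) = spectrum B
     \<and> length n_as = N"
proof -
  from jnf have z: "0 \<notin> fst ` set n_as" and sim: "similar_mat B (jordan_matrix n_as)"
    unfolding jordan_nf_def by auto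
  from similar_matD[OF sim] obtain n where "B \<in> carrier_mat n n" "jordan_matrix n_as \<in> carrier_mat n n"
    by auto
  with B have "n = N" by auto
  with \<open>jordan_matrix n_as \<in> carrier_mat n n\<close> have sum: "sum_list (map fst n_as) = N"
    using jordan_matrix_dim(1)[of n_as] by auto
  have cp: "char_poly B = (\<Prod>(n,a)\<leftarrow>n_as. [:- a, 1:] ^ n)" by (rule jordan_nf_char_poly[OF jnf])
  have spec: "spectrum B = set (map snd n_as)"
  proof -
    have "spectrum B = {k. poly (char_poly B) k = 0}" by (rule spectrum_root_char_poly[OF B])
    also have "\<dots> = set (map snd n_as)"
    proof (intro equalityI subsetI)
      fix k assume "k \<in> {k. poly (char_poly B) k = 0}"
      then have "poly (\<Prod>(n,a)\<leftarrow>n_as. [:- a, 1:] ^ n) k = 0" unfolding cp by simp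
      then show "k \<in> set (map snd n_as)"
        unfolding poly_prod_blocks by force
    next
      fix k assume "k \<in> set (map snd n_as)"
      then obtain m where m: "(m,k) \<in> set n_as" by auto
      then have "m \<noteq> 0" using z by force
      then have "poly (\<Prod>(n,a)\<leftarrow>n_as. [:- a, 1:] ^ n) k = 0" using m
        unfolding poly_prod_blocks by force
      then show "k \<in> {k. poly (char_poly B) k = 0}" unfolding cp by simp
    qed
    finally show ?thesis .
  qed
  have ge1: "\<forall>(k,a)\<in>set n_as. k \<ge> 1" using z by force
  have c: "card (set (map snd n_as)) = sum_list (map fst n_as)" using card spec sum by simp
  have *: "(\<forall>(k,a)\<in>set n_as. k = 1) \<and> distinct (map snd n_as)"
    using blocks_one[OF ge1] c by blast
  then have "card (set (map snd n_as)) = length (map snd n_as)" by (intro distinct_card) blast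
  then have l: "length n_as = N" using c sum by simp
  show ?thesis using * spec l by simp
qed


lemma mult_vec_sum: assumes "P \<in> carrier_mat nr n" "v \<in> carrier_vec n" "i < nr"
  shows "(P *\<^sub>v v) $ i = (\<Sum>k<n. P $$ (i,k) * v $ k)"
  using assms by (simp add: scalar_prod_def atLeast0LessThan)

definition iter :: "int mat \<Rightarrow> int vec \<Rightarrow> nat \<Rightarrow> int vec" where
  "iter A a m = ((\<lambda>v. A *\<^sub>v v) ^^ m) a"

lemma iter_Suc: "iter A a (Suc m) = A *\<^sub>v iter A a m"
  by (simp add: iter_def)

lemma iter_0: "iter A a 0 = a" by (simp add: iter_def)

lemma iter_carrier: "A \<in> carrier_mat N N \<Longrightarrow> a \<in> carrier_vec N \<Longrightarrow> iter A a m \<in> carrier_vec N"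
  by (induct m) (auto simp: iter_Suc iter_0)

lemma cmat_carrier: "A \<in> carrier_mat N N \<Longrightarrow> cmat A \<in> carrier_mat N N"
  by (simp add: cmat_def)

lemma iter_cx: assumes A: "A \<in> carrier_mat N N" and a: "a \<in> carrier_vec N"
  shows "map_vec of_int (iter A a (Suc m)) = cmat A *\<^sub>v map_vec (of_int :: int \<Rightarrow> complex) (iter A a m)"
  unfolding iter_Suc cmat_def
  by (rule of_int_hom.mult_mat_vec_hom[OF A iter_carrier[OF A a]])

lemma iter_y: assumes A: "A \<in> carrier_mat N N" and a: "a \<in> carrier_vec N"
  and Q: "Q \<in> carrier_mat N N" and QB: "Q * cmat A = diagm lam * Q" and len: "length lam = N"
  and k: "k < N"
  shows "(Q *\<^sub>v map_vec of_int (iter A a m)) $ k = lam ! k ^ m * (Q *\<^sub>v map_vec of_int a) $ k"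
  using k
proof (induct m arbitrary: k)
  case 0
  then show ?case by (simp add: iter_0)
next
  case (Suc m)
  have B: "cmat A \<in> carrier_mat N N" using A by (rule cmat_carrier)
  have x: "map_vec (of_int :: int \<Rightarrow> complex) (iter A a m) \<in> carrier_vec N"
    using iter_carrier[OF A a] by simp
  have D: "diagm lam \<in> carrier_mat N N" using len by (simp add: diagm_def)
  have "Q *\<^sub>v map_vec of_int (iter A a (Suc m)) = Q *\<^sub>v (cmat A *\<^sub>v map_vec of_int (iter A a m))"
    unfolding iter_cx[OF A a] ..
  also have "\<dots> = (Q * cmat A) *\<^sub>v map_vec of_int (iter A a m)"
    using Q B x by simp
  also have "\<dots> = diagm lam *\<^sub>v (Q *\<^sub>v map_vec of_int (iter A a m))"
    unfolding QB using D Q x by simp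
  finally have "(Q *\<^sub>v map_vec of_int (iter A a (Suc m))) $ k = lam ! k * (Q *\<^sub>v map_vec of_int (iter A a m)) $ k"
    using Suc.prems len Q x by (simp add: diagm_mult_vec)
  then show ?case using Suc by simp
qed


lemma map_poly_of_rat_monom_sum: "map_poly (of_rat :: rat \<Rightarrow> complex) (\<Sum>m<n. monom (c m) m) = (\<Sum>m<n. monom (of_rat (c m)) m)"
  by (induct n) (simp_all add: map_poly_of_rat_add map_poly_monom)

lemma krylov: fixes A :: "int mat" and P Q :: "complex mat"
  assumes A: "A \<in> carrier_mat N N" and irr: "irreducible (map_poly (of_int :: int \<Rightarrow> rat) (char_poly A))"
    and P: "P \<in> carrier_mat N N" and Q: "Q \<in> carrier_mat N N" and QP: "Q * P = 1\<^sub>m N" and PQ: "P * Q = 1\<^sub>m N"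
    and QB: "Q * cmat A = diagm lam * Q" and len: "length lam = N"
    and roots: "\<And>k. k < N \<Longrightarrow> poly (char_poly (cmat A)) (lam ! k) = 0"
    and k0: "k0 < N" and a: "a \<in> carrier_vec N" and a0: "a \<noteq> 0\<^sub>v N"
  shows "(Q *\<^sub>v map_vec of_int a) $ k0 \<noteq> 0"
proof
  assume z0: "(Q *\<^sub>v map_vec of_int a) $ k0 = 0"
  define xs where "xs m = map_vec (of_int :: int \<Rightarrow> complex) (iter A a m)" for m
  have xs: "xs m \<in> carrier_vec N" for m unfolding xs_def using iter_carrier[OF A a] by simp
  have N0: "N > 0" using k0 by simp
  have dimi: "dim_vec (iter A a m) = N" for m using iter_carrier[OF A a] by (simp add: carrier_vecD)
  define Mint where "Mint = mat N N (\<lambda>(i,m). iter A a m $ i)"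
  define Mc where "Mc = map_mat (of_int :: int \<Rightarrow> complex) Mint"
  define qv where "qv = vec N (\<lambda>j. Q $$ (k0, j))"
  have Mc: "Mc \<in> carrier_mat N N" unfolding Mc_def Mint_def by simp
  have Mci: "i < N \<Longrightarrow> m < N \<Longrightarrow> Mc $$ (i,m) = xs m $ i" for i m
    unfolding Mc_def Mint_def xs_def using dimi by simp
  have qv0: "qv \<noteq> 0\<^sub>v N"
  proof
    assume "qv = 0\<^sub>v N"
    then have "Q $$ (k0, j) = 0" if "j < N" for j using that
      by (metis index_vec index_zero_vec(1) qv_def)
    then have "(Q * P) $$ (k0, k0) = 0" using Q P k0 by (simp add: scalar_prod_def)
    then show False using QP k0 by simp
  qed
  have "transpose_mat Mc *\<^sub>v qv = 0\<^sub>v N"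
  proof (rule eq_vecI)
    fix m assume "m < dim_vec (0\<^sub>v N :: complex vec)"
    then have m: "m < N" by simp
    have "(transpose_mat Mc *\<^sub>v qv) $ m = (\<Sum>i<N. transpose_mat Mc $$ (m,i) * qv $ i)"
      by (rule mult_vec_sum[of _ N N], insert Mc m, auto simp: qv_def)
    also have "\<dots> = (\<Sum>i<N. Q $$ (k0, i) * xs m $ i)"
      by (rule sum.cong, insert Mc m, auto simp: Mci qv_def)
    also have "\<dots> = (Q *\<^sub>v xs m) $ k0" using mult_vec_sum[OF Q xs k0] by simp
    also have "\<dots> = 0" unfolding xs_def iter_y[OF A a Q QB len k0] z0 by simp
    finally show "(transpose_mat Mc *\<^sub>v qv) $ m = 0\<^sub>v N $ m" using m by simp
  qed (insert Mc, simp)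
  then have "\<exists>v. v \<in> carrier_vec N \<and> v \<noteq> 0\<^sub>v N \<and> transpose_mat Mc *\<^sub>v v = 0\<^sub>v N"
    using qv0 by (intro exI[of _ qv]) (auto simp: qv_def)
  then have "det (transpose_mat Mc) = 0"
    using det_0_iff_vec_prod_zero[of "transpose_mat Mc" N] Mc by simp
  then have "det Mc = 0" using det_transpose[OF Mc] by simp
  then have dMint: "det Mint = 0" unfolding Mc_def by (simp add: of_int_hom.hom_det)
  define Mr where "Mr = map_mat (of_int :: int \<Rightarrow> rat) Mint"
  have Mr: "Mr \<in> carrier_mat N N" unfolding Mr_def Mint_def by simp
  have "det Mr = 0" unfolding Mr_def using dMint by (simp add: of_int_hom.hom_det)
  then obtain c where c: "c \<in> carrier_vec N" "c \<noteq> 0\<^sub>v N" "Mr *\<^sub>v c = 0\<^sub>v N"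
    using det_0_iff_vec_prod_zero[OF Mr] by auto
  have rel: "(\<Sum>m<N. of_rat (c $ m) * xs m $ i) = 0" if i: "i < N" for i
  proof -
    have "(Mr *\<^sub>v c) $ i = 0" using c i by simp
    then have "(\<Sum>m<N. rat_of_int (iter A a m $ i) * c $ m) = 0"
      using mult_vec_sum[OF Mr c(1) i] i by (simp add: Mr_def Mint_def)
    then have "(of_rat (\<Sum>m<N. rat_of_int (iter A a m $ i) * c $ m) :: complex) = 0" by simp
    then show ?thesis unfolding xs_def using dimi i
      by (simp add: of_rat_sum of_rat_mult mult.commute)
  qed
  define y0 where "y0 = Q *\<^sub>v map_vec of_int a"
  have y0: "y0 \<in> carrier_vec N" unfolding y0_def using Q a by simp
  define p where "p = (\<Sum>m<N. monom (c $ m) m)"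
  have cp: "coeff p i = (if i < N then c $ i else 0)" for i
    unfolding p_def by (simp add: coeff_sum coeff_monom)
  have p0: "p \<noteq> 0"
  proof
    assume "p = 0"
    then have "c $ i = 0" if "i < N" for i using cp[of i] that by simp
    then have "c = 0\<^sub>v N" using c(1) by (intro eq_vecI) auto
    then show False using c(2) by simp
  qed
  have degp: "degree p < N"
  proof -
    have "degree p \<le> N - 1" by (rule degree_le, insert N0, auto simp: cp)
    then show ?thesis using N0 by simp
  qed
  have chi_deg: "degree (map_poly (of_int :: int \<Rightarrow> rat) (char_poly A)) = N"
    using degree_monic_char_poly[OF A] by simp
  have yk0: "y0 $ k = 0" if k: "k < N" for k
  proof -
    have "(\<Sum>m<N. of_rat (c $ m) * (Q *\<^sub>v xs m) $ k) = (\<Sum>m<N. of_rat (c $ m) * (\<Sum>i<N. Q $$ (k,i) * xs m $ i))"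
      using mult_vec_sum[OF Q xs k] by simp
    also have "\<dots> = (\<Sum>i<N. Q $$ (k,i) * (\<Sum>m<N. of_rat (c $ m) * xs m $ i))"
    proof -
      have "(\<Sum>m<N. of_rat (c $ m) * (\<Sum>i<N. Q $$ (k,i) * xs m $ i)) = (\<Sum>m<N. \<Sum>i<N. of_rat (c $ m) * (Q $$ (k,i) * xs m $ i))"
        by (simp only: sum_distrib_left)
      also have "\<dots> = (\<Sum>i<N. \<Sum>m<N. of_rat (c $ m) * (Q $$ (k,i) * xs m $ i))"
        by (rule sum.swap)
      also have "\<dots> = (\<Sum>i<N. Q $$ (k,i) * (\<Sum>m<N. of_rat (c $ m) * xs m $ i))"
        by (simp add: sum_distrib_left mult.left_commute)
      finally show ?thesis .
    qed
    also have "\<dots> = 0" using rel by simp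
    finally have "(\<Sum>m<N. of_rat (c $ m) * (lam ! k ^ m * y0 $ k)) = 0"
      unfolding xs_def y0_def iter_y[OF A a Q QB len k] .
    then have "y0 $ k * (\<Sum>m<N. of_rat (c $ m) * lam ! k ^ m) = 0"
      by (simp add: sum_distrib_left mult.commute mult.left_commute)
    moreover have "(\<Sum>m<N. of_rat (c $ m) * lam ! k ^ m) = poly (map_poly of_rat p) (lam ! k)"
      unfolding p_def map_poly_of_rat_monom_sum by (simp add: poly_sum poly_monom)
    moreover have "poly (map_poly of_rat p) (lam ! k) \<noteq> 0"
    proof (rule no_root_small[OF irr p0])
      show "degree p < degree (map_poly rat_of_int (char_poly A))" using degp chi_deg by simp
      have "poly (map_poly (of_rat :: rat \<Rightarrow> complex) (map_poly rat_of_int (char_poly A))) (lam ! k)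
        = poly (char_poly (cmat A)) (lam ! k)"
        unfolding cmat_def of_int_hom.char_poly_hom[OF A] by (simp add: map_poly_map_poly o_def)
      then show "poly (map_poly of_rat (map_poly rat_of_int (char_poly A))) (lam ! k) = 0"
        using roots[OF k] by simp
    qed
    ultimately show ?thesis by simp
  qed
  have "y0 = 0\<^sub>v N" using y0 yk0 by (intro eq_vecI) auto
  then have "P *\<^sub>v y0 = 0\<^sub>v N" using P by (intro eq_vecI) (auto simp: scalar_prod_def)
  moreover have "P *\<^sub>v y0 = map_vec of_int a"
    unfolding y0_def using P Q a by (simp flip: assoc_mult_mat_vec add: PQ)
  ultimately have "map_vec (of_int :: int \<Rightarrow> complex) a = 0\<^sub>v N" by simp
  then have "a = 0\<^sub>v N" using a by (intro eq_vecI) (auto simp: vec_eq_iff)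
  then show False using a0 by simp
qed


lemma realpos: assumes "(w::complex) \<in> \<real>" "Re w > 0" shows "w = of_real (cmod w)"
proof -
  from assms(1) obtain r where r: "w = of_real r" by (auto elim: Reals_cases)
  with assms(2) show ?thesis by simp
qed

lemma spectral_setup:
  fixes A :: "int mat" and N :: nat
  assumes N0: "N > 0"
    and A: "A \<in> carrier_mat N N"
    and irr: "irreducible (map_poly (of_int :: int \<Rightarrow> rat) (char_poly A))"
    and ev: "\<forall>k. eigenvalue (cmat A) k \<longrightarrow> k \<in> \<real> \<and> Re k > 0"
    and card: "card (spectrum (cmat A)) = N"
  shows "\<exists>Lf i0 C t. i0 < N \<and> C > 0 \<and>
     (\<forall>a \<in> carrier_vec N. canon_height A (pt a) = ereal (ln 2 * Hr N (Lf a))) \<and>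
     (\<forall>a \<in> carrier_vec N. a \<noteq> 0\<^sub>v N \<longrightarrow> Lf a i0 \<noteq> 0) \<and>
     (\<forall>a \<in> carrier_vec N. \<forall>i<N. \<bar>Lf a i\<bar> \<le> C * \<bar>Lf a i0\<bar>) \<and>
     (\<forall>a \<in> carrier_vec N. Lf a i0 = (\<Sum>j<N. real_of_int (a $ j) * t j))"
proof -
  define B where "B = cmat A"
  have B: "B \<in> carrier_mat N N" unfolding B_def using A by (rule cmat_carrier)
  obtain as where "char_poly B = (\<Prod>a\<leftarrow>as. [:- a, 1:])" using char_poly_factorized[OF B] by auto
  from jordan_nf_exists[OF B this] obtain n_as where jnf: "jordan_nf B n_as" by auto
  note jf = jnf_facts[OF B card[folded B_def] jnf]
  define lam where "lam = map snd n_as"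
  have ones: "\<forall>(k,a)\<in>set n_as. k = 1" and dist: "distinct lam" and setl: "set lam = spectrum B"
    and len: "length lam = N" using jf unfolding lam_def by auto
  have J: "jordan_matrix n_as = diagm lam" unfolding lam_def using ones by (rule jm_diag)
  from jnf obtain P Q where wit: "similar_mat_wit B (diagm lam) P Q"
    unfolding jordan_nf_def similar_mat_def J by auto
  have dB: "dim_row B = N" using B by simp
  from wit have P: "P \<in> carrier_mat N N" and Q: "Q \<in> carrier_mat N N" and PQ: "P * Q = 1\<^sub>m N"
    and QP: "Q * P = 1\<^sub>m N" and BPJQ: "B = P * diagm lam * Q"
    unfolding similar_mat_wit_def Let_def dB by auto
  have D: "diagm lam \<in> carrier_mat N N" using len by (simp add: diagm_def)
  have QB: "Q * cmat A = diagm lam * Q"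
  proof -
    have "Q * B = Q * (P * (diagm lam * Q))" using BPJQ P D Q by simp
    also have "\<dots> = (Q * P) * (diagm lam * Q)" using Q P D by (simp add: assoc_mult_mat[OF Q P, of "diagm lam * Q" N])
    also have "\<dots> = diagm lam * Q" unfolding QP using D Q by simp
    finally show ?thesis unfolding B_def .
  qed
  have roots: "poly (char_poly (cmat A)) (lam ! k) = 0" if "k < N" for k
  proof -
    have "lam ! k \<in> spectrum B" using that len setl nth_mem by metis
    then have "lam ! k \<in> {k. poly (char_poly B) k = 0}" using spectrum_root_char_poly[OF B] by simp
    then show ?thesis unfolding B_def by simp
  qed
  have evB: "w \<in> spectrum B \<Longrightarrow> w = of_real (cmod w) \<and> cmod w > 0" for w
  proof -
    assume "w \<in> spectrum B"
    then have "w \<in> \<real>" "Re w > 0" using ev unfolding spectrum_def B_def by auto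
    then have "w = of_real (cmod w)" by (rule realpos)
    moreover have "cmod w > 0" using \<open>Re w > 0\<close> using abs_Re_le_cmod[of w] by linarith
    ultimately show ?thesis by simp
  qed
  define \<delta> where "\<delta> = delta_A A"
  have \<delta>sr: "\<delta> = spectral_radius B" unfolding \<delta>_def delta_A_def B_def ..
  from spectral_radius_mem_max(1)[OF B N0] obtain zz where zz: "zz \<in> spectrum B" "\<delta> = cmod zz"
    unfolding \<delta>sr by auto
  have \<delta>0: "\<delta> > 0" using evB[OF zz(1)] zz(2) by simp
  have zzr: "zz = of_real \<delta>" using evB[OF zz(1)] zz(2) by simp
  from zz(1) obtain k0 where k0: "k0 < N" "lam ! k0 = of_real \<delta>"
    unfolding setl[symmetric] zzr using len by (metis in_set_conv_nth)
  have less: "cmod (lam ! k) < \<delta>" if k: "k < N" "k \<noteq> k0" for k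
  proof -
    have mem: "lam ! k \<in> spectrum B" using k len setl nth_mem by metis
    have le: "cmod (lam ! k) \<le> \<delta>" unfolding \<delta>sr using mem
      by (intro spectral_radius_mem_max(2)[OF B N0]) auto
    have "cmod (lam ! k) \<noteq> \<delta>"
    proof
      assume "cmod (lam ! k) = \<delta>"
      then have "lam ! k = lam ! k0" using evB[OF mem] k0 by simp
      then show False using nth_eq_iff_index_eq[OF dist, of k k0] k k0 len by simp
    qed
    with le show ?thesis by simp
  qed
  have ell: "ell_A A = 0"
  proof -
    have "{k - 1 | k a n_as. jordan_nf (cmat A) n_as \<and> (k, a) \<in> set n_as \<and> cmod a = delta_A A} = {0}"
    proof (intro equalityI subsetI)
      fix x assume "x \<in> {k - 1 | k a n_as. jordan_nf (cmat A) n_as \<and> (k, a) \<in> set n_as \<and> cmod a = delta_A A}"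
      then obtain k a n_as' where x: "x = k - 1" "jordan_nf B n_as'" "(k,a) \<in> set n_as'"
        unfolding B_def by auto
      from jnf_facts[OF B card[folded B_def] x(2)] x(3) have "k = 1" by auto
      then show "x \<in> {0}" using x by simp
    next
      fix x assume "x \<in> {0::nat}"
      have "n_as ! k0 \<in> set n_as" using k0 len unfolding lam_def by simp
      moreover have "n_as ! k0 = (1, lam ! k0)"
        using ones k0 len \<open>n_as ! k0 \<in> set n_as\<close> unfolding lam_def
        by (cases "n_as ! k0") auto
      ultimately have m1: "(1, lam ! k0) \<in> set n_as" by simp
      have m2: "cmod (lam ! k0) = delta_A A" using k0 \<delta>0 \<delta>_def by simp
      have m3: "jordan_nf (cmat A) n_as" using jnf unfolding B_def .
      have m4: "x = 1 - 1" using \<open>x \<in> {0}\<close> by simp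
      show "x \<in> {k - 1 | k a n_as. jordan_nf (cmat A) n_as \<and> (k, a) \<in> set n_as \<and> cmod a = delta_A A}"
        using m1 m2 m3 m4 by blast
    qed
    then show ?thesis unfolding ell_A_def by simp
  qed
  define zf where "zf a = (Q *\<^sub>v map_vec (of_int :: int \<Rightarrow> complex) a) $ k0" for a :: "int vec"
  define Lf where "Lf a i = Re (P $$ (i, k0) * zf a)" for a :: "int vec" and i
  have lim: "((\<lambda>n. real_of_int (iter A a n $ i) / \<delta> ^ n) \<longlongrightarrow> Lf a i) sequentially \<and>
      Im (P $$ (i, k0) * zf a) = 0" if a: "a \<in> carrier_vec N" and i: "i < N" for a i
  proof -
    define xs where "xs n = map_vec (of_int :: int \<Rightarrow> complex) (iter A a n)" for n
    have xs: "xs n \<in> carrier_vec N" for n unfolding xs_def using iter_carrier[OF A a] by simp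
    define y0 where "y0 = Q *\<^sub>v map_vec (of_int :: int \<Rightarrow> complex) a"
    have dimi: "dim_vec (iter A a n) = N" for n using iter_carrier[OF A a] by (simp add: carrier_vecD)
    have xsP: "xs n = P *\<^sub>v (Q *\<^sub>v xs n)" for n
      using P Q xs by (simp flip: assoc_mult_mat_vec add: PQ)
    have eq: "complex_of_real (real_of_int (iter A a n $ i) / \<delta> ^ n) =
       (\<Sum>k<N. P $$ (i,k) * ((lam ! k / of_real \<delta>) ^ n * y0 $ k))" for n
    proof -
      have "complex_of_int (iter A a n $ i) = xs n $ i" unfolding xs_def using i dimi by simp
      also have "\<dots> = (\<Sum>k<N. P $$ (i,k) * (Q *\<^sub>v xs n) $ k)"
        by (subst xsP, rule mult_vec_sum[OF P _ i], insert Q xs, simp)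
      also have "\<dots> = (\<Sum>k<N. P $$ (i,k) * (lam ! k ^ n * y0 $ k))"
        by (rule sum.cong, auto simp: xs_def y0_def iter_y[OF A a Q QB len])
      finally have "complex_of_int (iter A a n $ i) = (\<Sum>k<N. P $$ (i,k) * (lam ! k ^ n * y0 $ k))" .
      then have "complex_of_int (iter A a n $ i) / of_real \<delta> ^ n = (\<Sum>k<N. P $$ (i,k) * (lam ! k ^ n * y0 $ k)) / of_real \<delta> ^ n"
        by simp
      also have "\<dots> = (\<Sum>k<N. P $$ (i,k) * ((lam ! k / of_real \<delta>) ^ n * y0 $ k))"
        by (simp add: sum_divide_distrib power_divide)
      finally show ?thesis by simp
    qed
    have tk: "((\<lambda>n. P $$ (i,k) * ((lam ! k / of_real \<delta>) ^ n * y0 $ k)) \<longlongrightarrow>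
       (if k = k0 then P $$ (i,k) * y0 $ k else 0)) sequentially" if k: "k \<in> {..<N}" for k
    proof (cases "k = k0")
      case True
      then have "lam ! k / of_real \<delta> = 1" using k0 \<delta>0 by simp
      then show ?thesis using True by simp
    next
      case False
      have "cmod (lam ! k / of_real \<delta>) < 1" using less[of k] k False \<delta>0 by (simp add: norm_divide)
      then have "((\<lambda>n. (lam ! k / of_real \<delta>) ^ n) \<longlongrightarrow> 0) sequentially" by (rule LIMSEQ_power_zero)
      then have "((\<lambda>n. P $$ (i,k) * ((lam ! k / of_real \<delta>) ^ n * y0 $ k)) \<longlongrightarrow> P $$ (i,k) * (0 * y0 $ k)) sequentially"
        by (intro tendsto_mult[OF tendsto_const] tendsto_mult[OF _ tendsto_const])
      then show ?thesis using False by simp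
    qed
    have "((\<lambda>n. \<Sum>k<N. P $$ (i,k) * ((lam ! k / of_real \<delta>) ^ n * y0 $ k)) \<longlongrightarrow>
       (\<Sum>k<N. if k = k0 then P $$ (i,k) * y0 $ k else 0)) sequentially"
      by (rule tendsto_sum, rule tk)
    also have "(\<Sum>k<N. if k = k0 then P $$ (i,k) * y0 $ k else 0) = P $$ (i,k0) * zf a"
      using k0 unfolding zf_def y0_def by simp
    finally have c: "((\<lambda>n. complex_of_real (real_of_int (iter A a n $ i) / \<delta> ^ n)) \<longlongrightarrow> P $$ (i,k0) * zf a) sequentially"
      unfolding eq .
    from tendsto_Re[OF c] have r: "((\<lambda>n. real_of_int (iter A a n $ i) / \<delta> ^ n) \<longlongrightarrow> Lf a i) sequentially"
      unfolding Lf_def by simp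
    from tendsto_Im[OF c] have "((\<lambda>n. 0) \<longlongrightarrow> Im (P $$ (i,k0) * zf a)) sequentially" by simp
    then have "Im (P $$ (i,k0) * zf a) = 0" using LIMSEQ_unique tendsto_const by blast
    with r show ?thesis by simp
  qed
  have ch: "canon_height A (pt a) = ereal (ln 2 * Hr N (Lf a))" if a: "a \<in> carrier_vec N" for a
  proof -
    have it: "(mono_map A ^^ n) (pt a) = pt (iter A a n)" for n
    proof (induct n)
      case 0
      then show ?case by (simp add: iter_0)
    next
      case (Suc n)
      then show ?case using mono_pt[OF A iter_carrier[OF A a]] by (simp add: iter_Suc)
    qed
    have dimi: "dim_vec (iter A a n) = N" for n using iter_carrier[OF A a] by (simp add: carrier_vecD)
    have trm: "weil_height ((mono_map A ^^ n) (pt a)) / (real n ^ ell_A A * delta_A A ^ n)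
       = ln 2 * Hr N (\<lambda>i. real_of_int (iter A a n $ i) / \<delta> ^ n)" for n
    proof -
      have "weil_height ((mono_map A ^^ n) (pt a)) = ln 2 * Hr N (\<lambda>i. real_of_int (iter A a n $ i))"
        unfolding it by (rule weil_pt[OF dimi N0])
      moreover have "Hr N (\<lambda>i. real_of_int (iter A a n $ i) / \<delta> ^ n) = Hr N (\<lambda>i. real_of_int (iter A a n $ i)) / \<delta> ^ n"
        by (rule Hr_div[OF N0], insert \<delta>0, simp)
      ultimately show ?thesis unfolding ell \<delta>_def by simp
    qed
    have "((\<lambda>n. Hr N (\<lambda>i. real_of_int (iter A a n $ i) / \<delta> ^ n)) \<longlongrightarrow> Hr N (Lf a)) sequentially"
      by (rule Hr_tendsto[OF N0], insert lim[OF a], auto)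
    then have "((\<lambda>n. ereal (ln 2 * Hr N (\<lambda>i. real_of_int (iter A a n $ i) / \<delta> ^ n))) \<longlongrightarrow> ereal (ln 2 * Hr N (Lf a))) sequentially"
      by (intro tendsto_ereal tendsto_mult tendsto_const)
    then have "limsup (\<lambda>n. ereal (ln 2 * Hr N (\<lambda>i. real_of_int (iter A a n $ i) / \<delta> ^ n))) = ereal (ln 2 * Hr N (Lf a))"
      by (intro lim_imp_Limsup) auto
    then show ?thesis unfolding canon_height_def trm .
  qed
  obtain i0 where i0: "i0 < N" "P $$ (i0, k0) \<noteq> 0"
  proof -
    have "\<exists>i<N. P $$ (i, k0) \<noteq> 0"
    proof (rule ccontr)
      assume "\<not> (\<exists>i<N. P $$ (i, k0) \<noteq> 0)"
      then have "(Q * P) $$ (k0, k0) = 0" using Q P k0 by (simp add: scalar_prod_def)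
      then show False using QP k0 by simp
    qed
    then show ?thesis using that by blast
  qed
  have nz: "Lf a i0 \<noteq> 0" if a: "a \<in> carrier_vec N" and a0: "a \<noteq> 0\<^sub>v N" for a
  proof
    assume L0: "Lf a i0 = 0"
    have "zf a \<noteq> 0" unfolding zf_def
      by (rule krylov[OF A irr P Q QP PQ QB len roots k0(1) a a0])
    then have "P $$ (i0, k0) * zf a \<noteq> 0" using i0 by simp
    moreover have "Im (P $$ (i0, k0) * zf a) = 0" using lim[OF a i0(1)] by simp
    ultimately show False using L0 unfolding Lf_def by (simp add: complex_eq_iff)
  qed
  define C where "C = (\<Sum>i<N. cmod (P $$ (i, k0))) / cmod (P $$ (i0, k0))"
  have C1: "C \<ge> 1"
  proof -
    have "cmod (P $$ (i0, k0)) \<le> (\<Sum>i<N. cmod (P $$ (i, k0)))"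
      by (rule member_le_sum[of i0 "{..<N}" "\<lambda>i. cmod (P $$ (i, k0))"], insert i0, auto)
    then show ?thesis unfolding C_def using i0 by simp
  qed
  have bound: "\<bar>Lf a i\<bar> \<le> C * \<bar>Lf a i0\<bar>" if a: "a \<in> carrier_vec N" and i: "i < N" for a i
  proof -
    have w: "cmod (P $$ (i0, k0) * zf a) = \<bar>Lf a i0\<bar>"
      unfolding Lf_def using lim[OF a i0(1)] by (simp add: cmod_eq_Re)
    have z: "cmod (zf a) = \<bar>Lf a i0\<bar> / cmod (P $$ (i0, k0))"
      using w i0 by (simp add: norm_mult field_simps)
    have "\<bar>Lf a i\<bar> \<le> cmod (P $$ (i, k0) * zf a)" unfolding Lf_def by (rule abs_Re_le_cmod)
    also have "\<dots> = cmod (P $$ (i, k0)) * (\<bar>Lf a i0\<bar> / cmod (P $$ (i0, k0)))"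
      by (simp add: norm_mult z)
    also have "\<dots> \<le> (\<Sum>i<N. cmod (P $$ (i, k0))) * (\<bar>Lf a i0\<bar> / cmod (P $$ (i0, k0)))"
      by (intro mult_right_mono member_le_sum[of i "{..<N}" "\<lambda>i. cmod (P $$ (i, k0))"], insert i, auto)
    also have "\<dots> = C * \<bar>Lf a i0\<bar>" unfolding C_def by simp
    finally show ?thesis .
  qed
  define t where "t j = Re (P $$ (i0, k0) * Q $$ (k0, j))" for j
  have lin: "Lf a i0 = (\<Sum>j<N. real_of_int (a $ j) * t j)" if a: "a \<in> carrier_vec N" for a
  proof -
    have "zf a = (\<Sum>j<N. Q $$ (k0, j) * complex_of_int (a $ j))"
      unfolding zf_def by (subst mult_vec_sum[OF Q _ k0(1)], insert a, auto)
    then have "P $$ (i0, k0) * zf a = (\<Sum>j<N. complex_of_int (a $ j) * (P $$ (i0, k0) * Q $$ (k0, j)))"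
      by (simp add: sum_distrib_left algebra_simps)
    then show ?thesis unfolding Lf_def t_def by simp
  qed
  show ?thesis using i0(1) C1 ch nz bound lin by (intro exI[of _ Lf] exI[of _ i0] exI[of _ C] exI[of _ t]) auto
qed


theorem mainTheorem1:
  fixes A :: "int mat" and N :: nat and \<epsilon> :: real
  assumes "N \<ge> 2"
    and "A \<in> carrier_mat N N"
    and "det A \<noteq> 0"
    and "irreducible (map_poly (of_int :: int \<Rightarrow> rat) (char_poly A))"
    and "\<forall>k. eigenvalue (cmat A) k \<longrightarrow> k \<in> \<real> \<and> Re k > 0"
    and "card (spectrum (cmat A)) = N"
    and "\<epsilon> > 0"
  shows "infinite {P :: rat vec. P \<in> carrier_vec N \<and> (\<forall>i<N. P $ i \<noteq> 0)
                   \<and> 0 < canon_height A P \<and> canon_height A P < ereal \<epsilon>}"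
proof
  define S where "S = {P :: rat vec. P \<in> carrier_vec N \<and> (\<forall>i<N. P $ i \<noteq> 0)
                   \<and> 0 < canon_height A P \<and> canon_height A P < ereal \<epsilon>}"
  assume fin: "finite {P :: rat vec. P \<in> carrier_vec N \<and> (\<forall>i<N. P $ i \<noteq> 0)
                   \<and> 0 < canon_height A P \<and> canon_height A P < ereal \<epsilon>}"
  then have finS: "finite S" unfolding S_def .
  have N0: "N > 0" using assms(1) by simp
  from spectral_setup[OF N0 assms(2) assms(4) assms(5) assms(6)]
  obtain Lf i0 C t where props: "i0 < N \<and> C > 0 \<and>
     (\<forall>a \<in> carrier_vec N. canon_height A (pt a) = ereal (ln 2 * Hr N (Lf a))) \<and>
     (\<forall>a \<in> carrier_vec N. a \<noteq> 0\<^sub>v N \<longrightarrow> Lf a i0 \<noteq> 0) \<and>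
     (\<forall>a \<in> carrier_vec N. \<forall>i<N. \<bar>Lf a i\<bar> \<le> C * \<bar>Lf a i0\<bar>) \<and>
     (\<forall>a \<in> carrier_vec N. Lf a i0 = (\<Sum>j<N. real_of_int (a $ j) * t j))"
    by (elim exE) (rule that)
  have i0: "i0 < N" and C: "C > 0" using props by auto
  have ch: "\<And>a. a \<in> carrier_vec N \<Longrightarrow> canon_height A (pt a) = ereal (ln 2 * Hr N (Lf a))"
    using props by auto
  have nz: "\<And>a. a \<in> carrier_vec N \<Longrightarrow> a \<noteq> 0\<^sub>v N \<Longrightarrow> Lf a i0 \<noteq> 0" using props by auto
  have bd: "\<And>a i. a \<in> carrier_vec N \<Longrightarrow> i < N \<Longrightarrow> \<bar>Lf a i\<bar> \<le> C * \<bar>Lf a i0\<bar>"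
    using props by auto
  have lin: "\<And>a. a \<in> carrier_vec N \<Longrightarrow> Lf a i0 = (\<Sum>j<N. real_of_int (a $ j) * t j)"
    using props by auto
  define T where "T = insert (ereal \<epsilon>) (canon_height A ` S)"
  have finT: "finite T" "T \<noteq> {}" unfolding T_def using finS by auto
  define mu where "mu = Min T"
  have mpos: "mu > 0" unfolding mu_def using finT assms(7) by (auto simp: T_def S_def Min_gr_iff)
  have mle: "mu \<le> ereal \<epsilon>" unfolding mu_def T_def using finT by (intro Min_le) (auto simp: T_def)
  have mS: "mu \<le> canon_height A P" if "P \<in> S" for P unfolding mu_def using finT that by (intro Min_le) (auto simp: T_def)
  obtain \<eta> where eta: "mu = ereal \<eta>" using mpos mle by (cases mu) auto
  have eta0: "\<eta> > 0" using mpos eta by simp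
  have etaeps: "\<eta> \<le> \<epsilon>" using mle eta by simp
  define v where "v m n = (m \<cdot>\<^sub>v unit_vec N 0 + n \<cdot>\<^sub>v unit_vec N 1 :: int vec)" for m n :: int
  have v: "v m n \<in> carrier_vec N" for m n unfolding v_def by simp
  have vi: "j < N \<Longrightarrow> v m n $ j = (if j = 0 then m else 0) + (if j = 1 then n else 0)" for m n j
    unfolding v_def by (auto simp: unit_vec_def)
  have Lv: "Lf (v m n) i0 = of_int m * t 0 + of_int n * t 1" for m n
  proof -
    have "Lf (v m n) i0 = (\<Sum>j<N. real_of_int (v m n $ j) * t j)" by (rule lin[OF v])
    also have "\<dots> = (\<Sum>j<N. (if j = 0 then real_of_int m * t j else 0) + (if j = 1 then real_of_int n * t j else 0))"
      by (rule sum.cong, auto simp: vi)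
    also have "\<dots> = of_int m * t 0 + of_int n * t 1" using assms(1) by (simp add: sum.distrib)
    finally show ?thesis .
  qed
  have vnz: "m \<noteq> 0 \<or> n \<noteq> 0 \<Longrightarrow> v m n \<noteq> 0\<^sub>v N" for m n
  proof
    assume "m \<noteq> 0 \<or> n \<noteq> 0" "v m n = 0\<^sub>v N"
    moreover have "v m n $ 0 = m" "v m n $ 1 = n" using vi[of 0 m n] vi[of 1 m n] assms(1) by auto
    ultimately show False using assms(1) by auto
  qed
  have comb: "of_int m * t 0 + of_int n * t 1 \<noteq> 0" if "m \<noteq> 0 \<or> n \<noteq> 0" for m n
    using nz[OF v vnz[OF that]] Lv by simp
  define \<eta>' where "\<eta>' = \<eta> / (ln 2 * 2 * C)"
  have eta'0: "\<eta>' > 0" unfolding \<eta>'_def using eta0 C by simp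
  from small_comb[OF comb eta'0] obtain m n where mn: "0 < \<bar>of_int m * t 0 + of_int n * t 1\<bar>"
    "\<bar>of_int m * t 0 + of_int n * t 1\<bar> < \<eta>'" by blast
  define a where "a = v m n"
  have a: "a \<in> carrier_vec N" unfolding a_def by (rule v)
  have La: "Lf a i0 = of_int m * t 0 + of_int n * t 1" unfolding a_def by (rule Lv)
  have Hpos: "Hr N (Lf a) > 0" by (rule Hr_pos[OF i0], insert mn La, auto)
  have Hle: "Hr N (Lf a) \<le> 2 * (C * \<bar>Lf a i0\<bar>)" by (rule Hr_le[OF N0 bd[OF a]])
  have "ln 2 * Hr N (Lf a) \<le> ln 2 * (2 * (C * \<bar>Lf a i0\<bar>))" using Hle by simp
  also have "\<dots> < ln 2 * (2 * (C * \<eta>'))" using mn La C by simp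
  also have "\<dots> = \<eta>" unfolding \<eta>'_def using C by simp
  finally have lt: "ln 2 * Hr N (Lf a) < \<eta>" .
  have pos: "ln 2 * Hr N (Lf a) > 0" using Hpos by simp
  have inS: "pt a \<in> S"
    unfolding S_def using a ch[OF a] lt pos etaeps by (auto simp: pt_def)
  have "canon_height A (pt a) < mu" using ch[OF a] lt eta by simp
  with mS[OF inS] show False by simp
qed


end
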